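(* Let $n$ be even and $F\colon\mathbb F_2^n\to\mathbb F_2^n$ a quadratic function. Assume $N_F\cup\{0\}$ contains two subspaces $V,W\le\mathbb F_2^n$ with $V\oplus W=\mathbb F_2^n$. Then $|N_F|\ge 3\cdot(2^{n/2}-1)$. Furthermore, $N_F$ is a $3$-fold blocking set of $\mathrm{PG}(n-1,2)$ with respect to $(n/2)$-spaces, i.e. every subspace $U\le\mathbb F_2^n$ with $\dim U=\frac n2+1$ satisfies $|U\cap N_F|\ge3$.
   Context: $\langle\cdot,\cdot\rangle$ is the standard dot product; $F_b(x)=\langle b,F(x)\rangle$. $F$ is quadratic if each $F_b$ is a quadratic form plus an affine function. $F_b$ is bent if $|\sum_x(-1)^{F_b(x)+\langle x,a\rangle}|=2^{n/2}$ for all $a$. $N_F=\{b\in\mathbb F_2^n\setminus\{0\}\colon F_b\text{ not bent}\}$. $\mathrm{PG}(n-1,2)$ is identified with $\mathbb F_2^n\setminus\{0\}$; an $(n/2)$-space is $U\setminus\{0\}$ for a subspace $U$ of dimension $n/2+1$. *)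

theory Defs
  imports "HOL-Analysis.Analysis" "HOL-Library.Z2"
begin

text \<open>F_2^n is modelled as bit ^ 'n with n = CARD('n); subspaces and dimension are
  those of the library vector space interpretation vec (scalar multiplication *s).\<close>

definition dotp :: "bit ^ 'n \<Rightarrow> bit ^ 'n \<Rightarrow> bit" where
  "dotp a b = (\<Sum>i\<in>UNIV. a $ i * b $ i)"

definition component_fun :: "('a \<Rightarrow> bit ^ 'n) \<Rightarrow> bit ^ 'n \<Rightarrow> 'a \<Rightarrow> bit" where
  "component_fun F b = (\<lambda>x. dotp b (F x))"

definition is_quadratic_boolfun :: "(bit ^ 'n \<Rightarrow> bit) \<Rightarrow> bool" where
  "is_quadratic_boolfun f \<longleftrightarrow>
     (\<exists>(c :: 'n \<Rightarrow> 'n \<Rightarrow> bit) a e. \<forall>x.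
        f x = (\<Sum>i\<in>UNIV. \<Sum>j\<in>UNIV. c i j * x $ i * x $ j) + dotp a x + e)"

definition quadratic_fun :: "(bit ^ 'n \<Rightarrow> bit ^ 'n) \<Rightarrow> bool" where
  "quadratic_fun F \<longleftrightarrow> (\<forall>b. is_quadratic_boolfun (component_fun F b))"

definition sgn_bit :: "bit \<Rightarrow> int" where
  "sgn_bit z = (if z = 0 then 1 else -1)"

definition bent :: "(bit ^ 'n \<Rightarrow> bit) \<Rightarrow> bool" where
  "bent f \<longleftrightarrow> (\<forall>a. \<bar>\<Sum>x\<in>UNIV. sgn_bit (f x + dotp x a)\<bar> = 2 ^ (CARD('n) div 2))"

definition nonbent_set :: "(bit ^ 'n \<Rightarrow> bit ^ 'n) \<Rightarrow> (bit ^ 'n) set" where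
  "nonbent_set F = {b. b \<noteq> 0 \<and> \<not> bent (component_fun F b)}"

end

theory Submission
  imports Defs
begin
lemma bitU: "(UNIV::bit set) = {0,1}" by (auto intro: bit.exhaust)
instance bit :: finite by standard (simp add: bitU)
lemma card_bit: "CARD(bit) = 2" by (simp add: bitU)
lemma card_bitvec: "card (UNIV :: (bit^'n) set) = 2 ^ CARD('n)" by (simp add: card_bit)
lemma vec_add_self[simp]: "(x::bit^'n) + x = 0" by (simp add: vec_eq_iff) 
lemma vec_minus_eq: "(x::bit^'n) - y = x + y" by (simp add: vec_eq_iff) 

lemma sgn_bit_add: "sgn_bit (a + b) = sgn_bit a * sgn_bit b"
  by (cases a; cases b) (simp_all add: sgn_bit_def)
lemma sgn_bit_1[simp]: "sgn_bit 1 = -1" and sgn_bit_0[simp]: "sgn_bit 0 = 1"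
  by (simp_all add: sgn_bit_def)

lemma dotp_add1: "dotp (x + y) a = dotp x a + dotp y a"
  unfolding dotp_def by (simp only: vector_add_component distrib_right sum.distrib)
lemma dotp_add2: "dotp a (x + y) = dotp a x + dotp a y"
  unfolding dotp_def by (simp only: vector_add_component distrib_left sum.distrib)
lemma dotp_zero1[simp]: "dotp 0 a = 0" and dotp_zero2[simp]: "dotp a 0 = 0"
  by (simp_all add: dotp_def)

lemma char_sum_zero:
  fixes A :: "(bit^'n) set"
  assumes "\<And>x. x \<in> A \<Longrightarrow> x + c \<in> A" "\<And>x. x \<in> A \<Longrightarrow> g (x + c) = g x + 1"
  shows "(\<Sum>x\<in>A. sgn_bit (g x)) = 0"
proof -
  have fin: "finite A" by simp
  have bij: "bij_betw (\<lambda>x. x + c) A A"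
    unfolding bij_betw_def
  proof
    show "inj_on (\<lambda>x. x + c) A" by (auto simp: inj_on_def)
    show "(\<lambda>x. x + c) ` A = A"
    proof
      show "(\<lambda>x. x + c) ` A \<subseteq> A" using assms(1) by auto
      show "A \<subseteq> (\<lambda>x. x + c) ` A"
      proof
        fix x assume "x \<in> A"
        then have "x + c \<in> A" by (rule assms(1))
        moreover have "x = (x + c) + c" by (simp add: add.assoc)
        ultimately show "x \<in> (\<lambda>x. x + c) ` A" by blast
      qed
    qed
  qed
  have "(\<Sum>x\<in>A. sgn_bit (g x)) = (\<Sum>x\<in>A. sgn_bit (g (x + c)))"
    using sum.reindex_bij_betw[OF bij, of "\<lambda>x. sgn_bit (g x)"] by simp
  also have "\<dots> = (\<Sum>x\<in>A. - sgn_bit (g x))"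
    by (rule sum.cong) (auto simp: assms(2) sgn_bit_add)
  also have "\<dots> = - (\<Sum>x\<in>A. sgn_bit (g x))" by (simp add: sum_negf)
  finally show ?thesis by simp
qed

lemma sgn_sum_parity:
  assumes "finite A"
  shows "even (int (card A) - (\<Sum>x\<in>A. sgn_bit (g x)))"
proof -
  have "int (card A) - (\<Sum>x\<in>A. sgn_bit (g x)) = (\<Sum>x\<in>A. 1 - sgn_bit (g x))"
    by (simp add: sum_subtractf)
  moreover have "even (\<Sum>x\<in>A. 1 - sgn_bit (g x))"
    by (rule dvd_sum) (simp add: sgn_bit_def)
  ultimately show ?thesis by simp
qed

lemma int_sum_parity:
  fixes e :: "'a \<Rightarrow> int"
  assumes "finite A" "\<And>x. x \<in> A \<Longrightarrow> odd (e x)"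
  shows "even (int (card A) - (\<Sum>x\<in>A. e x))"
proof -
  have "int (card A) - (\<Sum>x\<in>A. e x) = (\<Sum>x\<in>A. 1 - e x)"
    by (simp add: sum_subtractf)
  moreover have "even (\<Sum>x\<in>A. 1 - e x)"
    by (rule dvd_sum) (use assms(2) in auto)
  ultimately show ?thesis by simp
qed

lemma card_even_shift:
  fixes A :: "(bit^'n) set"
  assumes "\<And>x. x \<in> A \<Longrightarrow> x + c \<in> A" "c \<noteq> 0"
  shows "even (card A)"
proof -
  obtain i where i: "c $ i = 1" using assms(2) by (metis bit_not_zero_iff vec_eq_iff zero_index)
  have "(\<Sum>x\<in>A. sgn_bit (x $ i)) = 0"
  proof (rule char_sum_zero[OF assms(1)])
    fix x :: "bit^'n" show "(x + c) $ i = x $ i + 1" using i by simp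
  qed
  with sgn_sum_parity[of A "\<lambda>x. x $ i"] show ?thesis by simp
qed

lemma dvd_sq_pow2:
  fixes S :: int
  shows "2 ^ (2*m+1) dvd S^2 \<Longrightarrow> 2 ^ (m+1) dvd S"
proof (induction m arbitrary: S)
  case 0
  then have "2 dvd S * S" by (simp add: power2_eq_square)
  then show ?case by simp
next
  case (Suc m)
  have "(2::int) dvd 2 ^ (2 * Suc m + 1)" by simp
  then have "2 dvd S * S" using Suc.prems dvd_trans unfolding power2_eq_square by blast
  then have "2 dvd S" by simp
  then obtain T where T: "S = 2 * T" by blast
  have e1: "(2::int)^(2*Suc m+1) = 2^(2*m+1)*4" by (simp add: power_add)
  have e2: "(2*T)^2 = T^2*4" by (simp add: power2_eq_square)
  have "2^(2*m+1) * 4 dvd T^2 * 4" using Suc.prems unfolding T e1 e2 .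
  then obtain k where "T^2 * 4 = 2^(2*m+1) * 4 * k" by (auto elim!: dvdE)
  then have "T^2 = 2^(2*m+1) * k" by simp
  then have "2^(2*m+1) dvd T^2" by simp
  then have "2^(m+1) dvd T" by (rule Suc.IH)
  then have "2 * 2^(m+1) dvd 2 * T" by (rule mult_dvd_mono[OF dvd_refl])
  then show ?case using T by simp
qed

lemma sum_translate:
  fixes x :: "bit^'n"
  shows "(\<Sum>y\<in>UNIV. h (x + y)) = (\<Sum>y\<in>UNIV. (h y :: int))"
proof -
  have bij: "bij_betw (\<lambda>y. x + y) UNIV UNIV"
    unfolding bij_betw_def
  proof
    show "inj (\<lambda>y. x + y)" by (auto simp: inj_on_def)
    show "range (\<lambda>y. x + y) = UNIV"
    proof (rule surjI)
      fix y show "x + (x + y) = y" by (simp add: add.assoc[symmetric])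
    qed
  qed
  show ?thesis using sum.reindex_bij_betw[OF bij, of h] by simp
qed

lemma walsh_square:
  fixes g :: "bit^'n \<Rightarrow> bit" and P :: "bit^'n \<Rightarrow> bit^'n \<Rightarrow> bit"
  assumes gP: "\<And>x y. g (x + y) = g x + g y + g 0 + P x y"
    and Padd: "\<And>x x' y. P (x + x') y = P x y + P x' y"
  shows "(\<Sum>x\<in>UNIV. sgn_bit (g x))^2 = 2^CARD('n) * (\<Sum>y\<in>{y. \<forall>x. P x y = 0}. sgn_bit (g y + g 0))"
proof -
  let ?R = "{y. \<forall>x. P x y = 0}"
  have inner: "(\<Sum>x\<in>UNIV. sgn_bit (P x y)) = (if y \<in> ?R then 2^CARD('n) else 0)" for y
  proof (cases "y \<in> ?R")
    case True
    then have "(\<Sum>x\<in>UNIV. sgn_bit (P x y)) = (\<Sum>x\<in>(UNIV::(bit^'n) set). 1)" by simp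
    also have "\<dots> = 2^CARD('n)" using card_bitvec[where 'n='n] by simp
    finally show ?thesis using True by simp
  next
    case False
    then obtain x0 where x0: "P x0 y = 1" by auto
    have "(\<Sum>x\<in>UNIV. sgn_bit (P x y)) = 0"
    proof (rule char_sum_zero)
      fix x :: "bit^'n" show "P (x + x0) y = P x y + 1" using Padd x0 by simp
    qed simp
    then show ?thesis using False by simp
  qed
  have "(\<Sum>x\<in>UNIV. sgn_bit (g x))^2 = (\<Sum>x\<in>UNIV. \<Sum>y\<in>UNIV. sgn_bit (g x) * sgn_bit (g y))"
    by (simp add: power2_eq_square sum_product)
  also have "\<dots> = (\<Sum>x\<in>UNIV. \<Sum>y\<in>UNIV. sgn_bit (g x) * sgn_bit (g (x + y)))"
    by (rule sum.cong[OF refl], rule sum_translate[symmetric])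
  also have "\<dots> = (\<Sum>x\<in>UNIV. \<Sum>y\<in>UNIV. sgn_bit (g y + g 0) * sgn_bit (P x y))"
  proof (intro sum.cong refl)
    fix x y
    have "g x + g (x + y) = (g y + g 0) + P x y"
      unfolding gP by (cases "g x"; cases "g y"; cases "g 0"; cases "P x y") simp_all
    then show "sgn_bit (g x) * sgn_bit (g (x + y)) = sgn_bit (g y + g 0) * sgn_bit (P x y)"
      by (metis sgn_bit_add)
  qed
  also have "\<dots> = (\<Sum>y\<in>UNIV. sgn_bit (g y + g 0) * (\<Sum>x\<in>UNIV. sgn_bit (P x y)))"
    by (subst sum.swap) (simp add: sum_distrib_left)
  also have "\<dots> = (\<Sum>y\<in>UNIV. if y \<in> ?R then 2^CARD('n) * sgn_bit (g y + g 0) else 0)"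
    by (rule sum.cong[OF refl]) (simp add: inner)
  also have "\<dots> = (\<Sum>y\<in>?R. 2^CARD('n) * sgn_bit (g y + g 0))"
    by (subst sum.inter_filter[symmetric]) simp_all
  also have "\<dots> = 2^CARD('n) * (\<Sum>y\<in>?R. sgn_bit (g y + g 0))"
    by (simp add: sum_distrib_left)
  finally show ?thesis .
qed


lemma rad_sum_even:
  fixes g :: "bit^'n \<Rightarrow> bit" and P :: "bit^'n \<Rightarrow> bit^'n \<Rightarrow> bit"
  assumes gP: "\<And>x y. g (x + y) = g x + g y + g 0 + P x y"
    and Padd: "\<And>x x' y. P (x + x') y = P x y + P x' y"
    and Psym: "\<And>x y. P x y = P y x"
    and ne: "{y. \<forall>x. P x y = 0} \<noteq> {0}"
  shows "even (\<Sum>y\<in>{y. \<forall>x. P x y = 0}. sgn_bit (g y + g 0))"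
proof -
  let ?R = "{y. \<forall>x. P x y = 0}"
  have P0: "P x 0 = 0" for x using Padd[of 0 0 x] Psym by (cases "P 0 x") (simp_all add: Psym)
  have Radd: "y + y0 \<in> ?R" if "y \<in> ?R" "y0 \<in> ?R" for y y0
  proof -
    have "P x (y + y0) = 0" for x
      using that Padd[of y y0 x] Psym[of x "y+y0"] Psym[of y x] Psym[of y0 x] by simp
    then show ?thesis by simp
  qed
  have "0 \<in> ?R" using P0 by simp
  with ne obtain y0 where y0: "y0 \<in> ?R" "y0 \<noteq> 0" by blast
  have evR: "even (card ?R)"
    by (rule card_even_shift[OF _ y0(2)]) (use Radd y0(1) in blast)
  show ?thesis
  proof (cases "\<forall>y\<in>?R. g y + g 0 = 0")
    case True
    then have "(\<Sum>y\<in>?R. sgn_bit (g y + g 0)) = (\<Sum>y\<in>?R. 1)" by (intro sum.cong) auto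
    then show ?thesis using evR by simp
  next
    case False
    then obtain z where z: "z \<in> ?R" "g z + g 0 = 1" by auto
    have "(\<Sum>y\<in>?R. sgn_bit (g y + g 0)) = 0"
    proof (rule char_sum_zero[where c = z])
      fix y assume "y \<in> ?R" then show "y + z \<in> ?R" using Radd z(1) by blast
    next
      fix y assume "y \<in> ?R"
      have "P y z = 0" using z(1) by simp
      then show "g (y + z) + g 0 = g y + g 0 + 1"
        unfolding gP using z(2) by (cases "g y"; cases "g z"; cases "g 0") simp_all
    qed
    then show ?thesis by simp
  qed
qed

lemma ring_expand: "(c::'a::comm_ring_1) * (a + b) * (a' + b') = c * a * a' + c * b * b' + c * (a * b' + b * a')"
  by (simp add: algebra_simps)

lemma char2_id:
  fixes q1 :: "'a::comm_ring_1"
  assumes "e + e = 0"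
  shows "q1 + q2 + p + a1 + a2 + e + d1 + d2 = (q1 + a1 + e + d1) + (q2 + a2 + e + d2) + e + p"
proof -
  have "(q1 + a1 + e + d1) + (q2 + a2 + e + d2) + e + p = (q1 + q2 + p + a1 + a2 + e + d1 + d2) + (e + e)"
    by (simp add: algebra_simps)
  then show ?thesis using assms by simp
qed

lemma quad_nonbent_dvd:
  fixes f :: "bit^'n \<Rightarrow> bit"
  assumes ev: "even CARD('n)" and q: "is_quadratic_boolfun f" and nb: "\<not> bent f"
  shows "2^(CARD('n) div 2 + 1) dvd (\<Sum>x\<in>UNIV. sgn_bit (f x))"
proof -
  obtain c a e where fq: "\<And>x. f x = (\<Sum>i\<in>UNIV. \<Sum>j\<in>UNIV. c i j * x $ i * x $ j) + dotp a x + e"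
    using q unfolding is_quadratic_boolfun_def by blast
  define Q where "Q x = (\<Sum>i\<in>UNIV. \<Sum>j\<in>UNIV. c i j * x $ i * x $ j)" for x :: "bit^'n"
  define P where "P x y = (\<Sum>i\<in>UNIV. \<Sum>j\<in>UNIV. c i j * (x $ i * y $ j + y $ i * x $ j))" for x y :: "bit^'n"
  have Qadd: "Q (x + y) = Q x + Q y + P x y" for x y
    unfolding Q_def P_def by (simp only: vector_add_component ring_expand sum.distrib)
  have Q0: "Q 0 = 0" unfolding Q_def by simp
  have Padd: "P (x + x') y = P x y + P x' y" for x x' y
    unfolding P_def by (simp only: vector_add_component distrib_right distrib_left sum.distrib add_ac)
  have Psym: "P x y = P y x" for x y
    unfolding P_def by (simp only: add.commute)
  define fb where "fb b x = f x + dotp x b" for b x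
  have gP: "fb b (x + y) = fb b x + fb b y + fb b 0 + P x y" for b x y
  proof -
    have "fb b (x + y) = Q x + Q y + P x y + dotp a x + dotp a y + e + dotp x b + dotp y b"
      unfolding fb_def fq Q_def[symmetric] Qadd dotp_add1 dotp_add2 by (simp only: add_ac)
    moreover have "fb b 0 = e" unfolding fb_def fq Q_def[symmetric] Q0 by simp
    ultimately show ?thesis unfolding fb_def fq Q_def[symmetric]
      using char2_id[of e "Q x" "Q y" "P x y" "dotp a x" "dotp a y" "dotp x b" "dotp y b"] by simp
  qed
  let ?R = "{y. \<forall>x. P x y = 0}"
  obtain m where m: "CARD('n) = 2 * m" using ev by blast
  have ne: "?R \<noteq> {0}"
  proof
    assume R0: "?R = {0}"
    have "\<bar>\<Sum>x\<in>UNIV. sgn_bit (f x + dotp x b)\<bar> = 2 ^ (CARD('n) div 2)" for b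
    proof -
      have "(\<Sum>x\<in>UNIV. sgn_bit (fb b x))^2 = 2^CARD('n) * (\<Sum>y\<in>?R. sgn_bit (fb b y + fb b 0))"
        by (rule walsh_square[OF gP Padd])
      also have "\<dots> = (2^m)^2" unfolding R0 m by (simp add: power_mult power2_eq_square power_mult_distrib[symmetric])
      finally have "\<bar>\<Sum>x\<in>UNIV. sgn_bit (fb b x)\<bar>^2 = (2^m)^2" by simp
      then have "\<bar>\<Sum>x\<in>UNIV. sgn_bit (fb b x)\<bar> = 2^m"
        by (subst (asm) power2_eq_iff_nonneg) auto
      then show ?thesis unfolding fb_def m by simp
    qed
    then have "bent f" unfolding bent_def by blast
    with nb show False by simp
  qed
  have f0: "fb 0 = f" unfolding fb_def by (simp add: fun_eq_iff)
  have "(\<Sum>x\<in>UNIV. sgn_bit (f x))^2 = 2^CARD('n) * (\<Sum>y\<in>?R. sgn_bit (f y + f 0))"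
    using walsh_square[OF gP[of 0] Padd] unfolding f0 .
  moreover have "even (\<Sum>y\<in>?R. sgn_bit (f y + f 0))"
    using rad_sum_even[OF gP[of 0] Padd Psym ne] unfolding f0 .
  ultimately have "2^(2*m+1) dvd (\<Sum>x\<in>UNIV. sgn_bit (f x))^2"
    unfolding m by (auto simp: power_add intro: mult_dvd_mono)
  then show ?thesis using dvd_sq_pow2 m by simp
qed


lemma card_subspace:
  fixes U :: "(bit^'n) set"
  assumes U: "vec.subspace U"
  shows "card U = 2 ^ vec.dim U"
proof -
  obtain B where B: "B \<subseteq> U" "vec.independent B" "U \<subseteq> vec.span B" "card B = vec.dim U"
    using vec.basis_exists by blast
  have finB: "finite B" by simp
  have spanB: "vec.span B = U" using vec.span_subspace[OF B(1) B(3) U] .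
  define \<phi> where "\<phi> u = (\<Sum>v\<in>B. u v *s v)" for u :: "bit^'n \<Rightarrow> bit"
  have img: "\<phi> ` (B \<rightarrow>\<^sub>E UNIV) = U"
  proof
    show "\<phi> ` (B \<rightarrow>\<^sub>E UNIV) \<subseteq> U"
      using vec.span_finite[OF finB] spanB unfolding \<phi>_def by auto
    show "U \<subseteq> \<phi> ` (B \<rightarrow>\<^sub>E UNIV)"
    proof
      fix x assume "x \<in> U"
      then obtain u where u: "x = \<phi> u" using vec.span_finite[OF finB] spanB unfolding \<phi>_def by auto
      have "\<phi> u = \<phi> (restrict u B)" unfolding \<phi>_def by (rule sum.cong) auto
      moreover have "restrict u B \<in> B \<rightarrow>\<^sub>E UNIV" by simp
      ultimately show "x \<in> \<phi> ` (B \<rightarrow>\<^sub>E UNIV)" using u by blast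
    qed
  qed
  have inj: "inj_on \<phi> (B \<rightarrow>\<^sub>E UNIV)"
  proof (rule inj_onI)
    fix u u' assume u: "u \<in> B \<rightarrow>\<^sub>E UNIV" and u': "u' \<in> B \<rightarrow>\<^sub>E UNIV" and eq: "\<phi> u = \<phi> u'"
    have "(\<Sum>v\<in>B. (u v - u' v) *s v) = \<phi> u - \<phi> u'"
      unfolding \<phi>_def by (simp only: vec.scale_left_diff_distrib sum_subtractf)
    also have "\<dots> = 0" using eq by simp
    finally have z: "(\<Sum>v\<in>B. (u v - u' v) *s v) = 0" .
    have "\<forall>c. (\<Sum>v\<in>B. c v *s v) = 0 \<longrightarrow> (\<forall>v\<in>B. c v = 0)"
      using B(2) unfolding vec.independent_explicit by blast
    from this[rule_format, OF z] have "\<forall>v\<in>B. u v - u' v = 0" by blast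
    then have "\<forall>v\<in>B. u v = u' v" by (metis eq_iff_diff_eq_0)
    then show "u = u'" using u u' by (metis PiE_ext)
  qed
  have "card U = card (B \<rightarrow>\<^sub>E (UNIV :: bit set))"
    using card_image[OF inj] img by simp
  also have "\<dots> = 2 ^ card B" by (simp add: card_PiE[OF finB] card_bit)
  finally show ?thesis using B(4) by simp
qed


lemma parity_nonbent:
  fixes F :: "bit^'n \<Rightarrow> bit^'n" and U :: "(bit^'n) set"
  assumes ev: "even CARD('n)" and q: "quadratic_fun F" and U: "vec.subspace U"
    and dU: "vec.dim U = CARD('n) div 2 + 1"
  shows "odd (card (U \<inter> nonbent_set F))"
proof -
  obtain m where m: "CARD('n) = 2 * m" using ev by blast
  have "CARD('n) > 0" by (rule zero_less_card_finite)
  then have m1: "m \<ge> 1" using m by simp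
  define W where "W b = (\<Sum>x\<in>UNIV. sgn_bit (component_fun F b x))" for b
  have cU: "card U = 2^(m+1)" using card_subspace[OF U] dU m by simp
  have dvdU: "int (card U) dvd (\<Sum>b\<in>U. W b)"
  proof -
    have "(\<Sum>b\<in>U. W b) = (\<Sum>x\<in>UNIV. \<Sum>b\<in>U. sgn_bit (dotp b (F x)))"
      unfolding W_def component_fun_def by (rule sum.swap)
    also have "int (card U) dvd \<dots>"
    proof (rule dvd_sum)
      fix x
      show "int (card U) dvd (\<Sum>b\<in>U. sgn_bit (dotp b (F x)))"
      proof (cases "\<forall>b\<in>U. dotp b (F x) = 0")
        case True
        then have "(\<Sum>b\<in>U. sgn_bit (dotp b (F x))) = (\<Sum>b\<in>U. 1)" by (intro sum.cong) auto
        then show ?thesis by simp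
      next
        case False
        then obtain b0 where b0: "b0 \<in> U" "dotp b0 (F x) = 1" by auto
        have "(\<Sum>b\<in>U. sgn_bit (dotp b (F x))) = 0"
        proof (rule char_sum_zero[where c = b0])
          fix b assume "b \<in> U" then show "b + b0 \<in> U" using vec.subspace_add[OF U] b0(1) by blast
        next
          fix b show "dotp (b + b0) (F x) = dotp b (F x) + 1" using b0(2) by (simp add: dotp_add1)
        qed
        then show ?thesis by simp
      qed
    qed
    finally show ?thesis .
  qed
  define Nb where "Nb = U \<inter> nonbent_set F"
  define Bt where "Bt = {b\<in>U. b \<noteq> 0 \<and> bent (component_fun F b)}"
  have U0: "0 \<in> U" using vec.subspace_0[OF U] .
  have Ueq: "U = insert 0 (Bt \<union> Nb)" unfolding Bt_def Nb_def nonbent_set_def using U0 by auto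
  have nz: "0 \<notin> Bt \<union> Nb" unfolding Bt_def Nb_def nonbent_set_def by auto
  have dj: "Bt \<inter> Nb = {}" unfolding Bt_def Nb_def nonbent_set_def by auto
  have sumU: "(\<Sum>b\<in>U. W b) = W 0 + (\<Sum>b\<in>Bt. W b) + (\<Sum>b\<in>Nb. W b)"
    by (subst Ueq, subst sum.insert, simp, rule nz, subst sum.union_disjoint) (simp_all add: dj)
  have cardU: "card U = 1 + card Bt + card Nb"
    by (subst Ueq, subst card_insert_disjoint, simp, rule nz, subst card_Un_disjoint) (simp_all add: dj)
  have W0: "W 0 = 2^(2*m)"
    unfolding W_def component_fun_def using card_bitvec[where 'n='n] m by simp
  have d0: "(2::int)^(m+1) dvd W 0" unfolding W0 by (rule le_imp_power_dvd) (use m1 in simp)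
  have dNb: "(2::int)^(m+1) dvd (\<Sum>b\<in>Nb. W b)"
  proof (rule dvd_sum)
    fix b assume "b \<in> Nb"
    then have "\<not> bent (component_fun F b)" unfolding Nb_def nonbent_set_def by auto
    moreover have "is_quadratic_boolfun (component_fun F b)" using q unfolding quadratic_fun_def by blast
    ultimately show "(2::int)^(m+1) dvd W b" using quad_nonbent_dvd[OF ev] m unfolding W_def by simp
  qed
  have "(2::int)^(m+1) dvd (\<Sum>b\<in>U. W b)" using dvdU cU by simp
  moreover have "(\<Sum>b\<in>Bt. W b) = (\<Sum>b\<in>U. W b) - W 0 - (\<Sum>b\<in>Nb. W b)"
    using sumU by simp
  ultimately have dBt: "(2::int)^(m+1) dvd (\<Sum>b\<in>Bt. W b)"
    using d0 dNb by (simp add: dvd_diff)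
  have absW: "\<bar>W b\<bar> = 2^m" if "b \<in> Bt" for b
  proof -
    have "bent (component_fun F b)" using that unfolding Bt_def by auto
    then have "\<bar>\<Sum>x\<in>UNIV. sgn_bit (component_fun F b x + dotp x 0)\<bar> = 2 ^ (CARD('n) div 2)"
      unfolding bent_def by blast
    then show ?thesis unfolding W_def dotp_zero2 add_0_right using m by simp
  qed
  have Wb: "W b = 2^m * sgn (W b)" if "b \<in> Bt" for b
  proof -
    have "W b = \<bar>W b\<bar> * sgn (W b)" by (simp add: abs_mult_sgn)
    then show ?thesis using absW[OF that] by simp
  qed
  have "(\<Sum>b\<in>Bt. W b) = 2^m * (\<Sum>b\<in>Bt. sgn (W b))"
    unfolding sum_distrib_left by (rule sum.cong[OF refl]) (rule Wb)
  with dBt have "2^m * 2 dvd 2^m * (\<Sum>b\<in>Bt. sgn (W b))" by simp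
  then obtain k where "2^m * (\<Sum>b\<in>Bt. sgn (W b)) = 2^m * 2 * k" by (auto elim!: dvdE)
  then have "(\<Sum>b\<in>Bt. sgn (W b)) = 2 * k" by simp
  then have ev2: "even (\<Sum>b\<in>Bt. sgn (W b))" by simp
  have "even (int (card Bt) - (\<Sum>b\<in>Bt. sgn (W b)))"
  proof (rule int_sum_parity)
    fix b assume "b \<in> Bt"
    from Wb[OF this] have "W b \<noteq> 0 \<Longrightarrow> odd (sgn (W b))" by (auto simp: sgn_if)
    moreover have "W b \<noteq> 0" using absW[OF \<open>b \<in> Bt\<close>] by auto
    ultimately show "odd (sgn (W b))" by blast
  qed simp
  with ev2 have "even (card Bt)" by simp
  moreover have "even (card U)" unfolding cU by simp
  ultimately show ?thesis using cardU unfolding Nb_def by simp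
qed


lemma pow_sum_ge4: "a + b \<ge> 2 \<Longrightarrow> (2::nat)^a + 2^b \<ge> 4"
proof -
  assume h: "a + b \<ge> 2"
  consider "a = 0" | "b = 0" | "a \<ge> 1 \<and> b \<ge> 1" by linarith
  then show ?thesis
  proof cases
    case 1 then have "b \<ge> 2" using h by simp
    then have "(2::nat)^b \<ge> 2^2" by (rule power_increasing) simp
    then show ?thesis by simp
  next
    case 2 then have "a \<ge> 2" using h by simp
    then have "(2::nat)^a \<ge> 2^2" by (rule power_increasing) simp
    then show ?thesis by simp
  next
    case 3
    then have "(2::nat)^a \<ge> 2^1" "(2::nat)^b \<ge> 2^1" by (meson one_le_numeral power_increasing)+
    then show ?thesis by simp
  qed
qed

lemma dim_inter_ge:
  fixes U V :: "(bit^'n) set"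
  assumes "vec.subspace U" "vec.subspace V"
  shows "vec.dim (U \<inter> V) + CARD('n) \<ge> vec.dim U + vec.dim V"
  using vec.dim_sums_Int[OF assms] dim_subset_UNIV_cart_gen[of "{x + y |x y. x \<in> U \<and> y \<in> V}"]
  by linarith

lemma card_subspace_minus0:
  fixes U :: "(bit^'n) set"
  assumes "vec.subspace U"
  shows "card (U - {0}) = 2 ^ vec.dim U - 1"
  using card_subspace[OF assms] vec.subspace_0[OF assms] by (simp add: card_Diff_singleton)

lemma blocking:
  fixes F :: "bit^'n \<Rightarrow> bit^'n" and V W U :: "(bit^'n) set"
  assumes ev: "even CARD('n)" and q: "quadratic_fun F"
    and V: "vec.subspace V" and W: "vec.subspace W"
    and VN: "V \<subseteq> nonbent_set F \<union> {0}" and WN: "W \<subseteq> nonbent_set F \<union> {0}"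
    and VW: "V \<inter> W = {0}" and dVW: "vec.dim V + vec.dim W = CARD('n)"
    and U: "vec.subspace U" and dU: "vec.dim U = CARD('n) div 2 + 1"
  shows "card (U \<inter> nonbent_set F) \<ge> 3"
proof -
  obtain m where m: "CARD('n) = 2 * m" using ev by blast
  let ?d1 = "vec.dim (U \<inter> V)" and ?d2 = "vec.dim (U \<inter> W)"
  have "?d1 + ?d2 \<ge> 2"
    using dim_inter_ge[OF U V] dim_inter_ge[OF U W] dVW dU m by simp
  then have p4: "(2::nat)^?d1 + 2^?d2 \<ge> 4" by (rule pow_sum_ge4)
  have UV: "vec.subspace (U \<inter> V)" using vec.subspace_inter[OF U V] .
  have UW: "vec.subspace (U \<inter> W)" using vec.subspace_inter[OF U W] .
  have c1: "card ((U \<inter> V) - {0}) = 2^?d1 - 1" by (rule card_subspace_minus0[OF UV])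
  have c2: "card ((U \<inter> W) - {0}) = 2^?d2 - 1" by (rule card_subspace_minus0[OF UW])
  have dj: "((U \<inter> V) - {0}) \<inter> ((U \<inter> W) - {0}) = {}" using VW by auto
  have sub: "((U \<inter> V) - {0}) \<union> ((U \<inter> W) - {0}) \<subseteq> U \<inter> nonbent_set F" using VN WN by auto
  have "card (((U \<inter> V) - {0}) \<union> ((U \<inter> W) - {0})) \<le> card (U \<inter> nonbent_set F)"
    by (rule card_mono[OF _ sub]) simp
  moreover have "card (((U \<inter> V) - {0}) \<union> ((U \<inter> W) - {0})) = (2^?d1 - 1) + (2^?d2 - 1)"
    using card_Un_disjoint[OF _ _ dj] c1 c2 by simp
  moreover have "(2::nat)^?d1 \<ge> 1" "(2::nat)^?d2 \<ge> 1" by simp_all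
  ultimately have "card (U \<inter> nonbent_set F) \<ge> 2" using p4 by linarith
  moreover have "odd (card (U \<inter> nonbent_set F))" by (rule parity_nonbent[OF ev q U dU])
  ultimately show ?thesis by (metis Suc_leI dvd_refl le_neq_implies_less numeral_2_eq_2 numeral_3_eq_3)
qed


lemma pow_arith:
  assumes "m \<le> k" "k \<le> 2 * m" "1 \<le> m"
  shows "3 * ((2::nat)^m - 1) \<le> (2^k - 1) + 2 * (2^(2*m - k) - 1)"
proof -
  have "3 * (2::nat)^m \<le> 2^k + 2 * 2^(2*m - k)"
  proof -
    consider "k = m" | "k = m + 1" | "k \<ge> m + 2" using assms(1) by linarith
    then show ?thesis
    proof cases
      case 1 then show ?thesis by (simp add: mult_2[symmetric])
    next
      case 2
      then have "2*m - k = m - 1" by simp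
      moreover have "(2::nat) * 2^(m-1) = 2^m" using assms(3) by (metis Suc_diff_1 le_less_trans less_numeral_extra(1) power_Suc le_eq_less_or_eq)
      ultimately show ?thesis using 2 by simp
    next
      case 3
      then have "(2::nat)^(m+2) \<le> 2^k" by (rule power_increasing) simp
      then show ?thesis by (simp add: power_add)
    qed
  qed
  moreover have "(1::nat) \<le> 2^m" "(1::nat) \<le> 2^k" "(1::nat) \<le> 2^(2*m-k)" by simp_all
  ultimately show ?thesis by linarith
qed

lemma part1:
  fixes F :: "bit^'n \<Rightarrow> bit^'n" and V W :: "(bit^'n) set"
  assumes ev: "even CARD('n)" and q: "quadratic_fun F"
    and V: "vec.subspace V" and W: "vec.subspace W"
    and VN: "V \<subseteq> nonbent_set F \<union> {0}" and WN: "W \<subseteq> nonbent_set F \<union> {0}"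
    and VW: "V \<inter> W = {0}" and dVW: "vec.dim V + vec.dim W = CARD('n)"
    and dV: "vec.dim V \<ge> CARD('n) div 2"
  shows "card (nonbent_set F) \<ge> 3 * (2 ^ (CARD('n) div 2) - 1)"
proof -
  let ?N = "nonbent_set F"
  obtain m where m: "CARD('n) = 2 * m" using ev by blast
  have "CARD('n) > 0" by (rule zero_less_card_finite)
  then have m1: "m \<ge> 1" using m by simp
  define k where "k = vec.dim V"
  have dW: "vec.dim W = 2*m - k" using dVW m k_def by simp
  have km: "m \<le> k" "k \<le> 2*m" using dV dVW m k_def by simp_all
  obtain B where B: "B \<subseteq> V" "vec.independent B" "V \<subseteq> vec.span B" "card B = vec.dim V"
    using vec.basis_exists by blast
  obtain B0 where B0: "B0 \<subseteq> B" "card B0 = m" "finite B0"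
    using obtain_subset_with_card_n[of m B] B(4) km k_def by auto
  define V0 where "V0 = vec.span B0"
  have indB0: "vec.independent B0" using vec.independent_mono[OF B(2) B0(1)] .
  have dV0: "vec.dim V0 = m" unfolding V0_def using vec.dim_span_eq_card_independent[OF indB0] B0(2) by simp
  have V0V: "V0 \<subseteq> V" unfolding V0_def using vec.span_minimal[of B0 V] B0(1) B(1) V by blast
  have sV0: "vec.subspace V0" unfolding V0_def by (rule vec.subspace_span)
  have spV0: "vec.span V0 = V0" using sV0 by (simp add: vec.span_eq_iff)
  have cV0: "card (V0 - {0}) = 2^m - 1" using card_subspace_minus0[OF sV0] dV0 by simp
  have ex: "\<exists>e. e \<in> ?N \<and> e \<notin> V \<and> e \<notin> W \<and> e + w \<in> V" if w: "w \<in> W - {0}" for w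
  proof -
    define Uw where "Uw = vec.span (insert w V0)"
    have wV0: "w \<notin> V0" using w V0V VW by auto
    have sUw: "vec.subspace Uw" unfolding Uw_def by (rule vec.subspace_span)
    have dUw: "vec.dim Uw = CARD('n) div 2 + 1"
      unfolding Uw_def vec.dim_span vec.dim_insert spV0 using wV0 dV0 m by simp
    have odd: "odd (card (Uw \<inter> ?N))" by (rule parity_nonbent[OF ev q sUw dUw])
    define Z where "Z = insert w (V0 - {0})"
    have wN: "w \<in> ?N" using w WN by auto
    have ZN: "Z \<subseteq> Uw \<inter> ?N"
    proof -
      have "insert w V0 \<subseteq> Uw" unfolding Uw_def by (rule vec.span_superset)
      moreover have "V0 - {0} \<subseteq> ?N" using V0V VN by auto
      ultimately show ?thesis unfolding Z_def using wN by auto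
    qed
    have cZ: "card Z = 2^m" unfolding Z_def using cV0 wV0
      by (simp add: card_insert_disjoint)
    have "Z \<noteq> Uw \<inter> ?N" using odd cZ m1 by auto
    then obtain e where e: "e \<in> Uw" "e \<in> ?N" "e \<notin> Z" using ZN by blast
    obtain c where c: "e - c *s w \<in> V0" using e(1) unfolding Uw_def vec.span_insert spV0 by blast
    have e0: "e \<noteq> 0" using e(2) unfolding nonbent_set_def by simp
    have c1: "c = 1"
    proof (rule ccontr)
      assume "c \<noteq> 1" then have "c = 0" by simp
      then have "e \<in> V0" using c by simp
      then show False using e(3) e0 unfolding Z_def by auto
    qed
    have ewV0: "e + w \<in> V0" using c c1 by (simp add: vec_minus_eq)
    then have ewV: "e + w \<in> V" using V0V by blast
    have ew: "e \<noteq> w" using e(3) unfolding Z_def by auto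
    have "e \<notin> V"
    proof
      assume "e \<in> V"
      then have "e - (e + w) \<in> V" using vec.subspace_diff[OF V _ ewV] by blast
      then have "w \<in> V" by (simp add: vec_minus_eq add.assoc[symmetric])
      then show False using w VW by auto
    qed
    moreover have "e \<notin> W"
    proof
      assume "e \<in> W"
      then have "e + w \<in> W" using vec.subspace_add[OF W] w by blast
      then have "e + w = 0" using ewV VW by auto
      then have "e = w" by (metis add.assoc add_0_right vec_add_self add_0_left add.commute)
      then show False using ew by simp
    qed
    ultimately show ?thesis using e(2) ewV by blast
  qed
  then obtain g where g: "\<And>w. w \<in> W - {0} \<Longrightarrow> g w \<in> ?N \<and> g w \<notin> V \<and> g w \<notin> W \<and> g w + w \<in> V"
    by metis
  have inj: "inj_on g (W - {0})"
  proof (rule inj_onI)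
    fix w w' assume w: "w \<in> W - {0}" and w': "w' \<in> W - {0}" and eq: "g w = g w'"
    have "(g w + w) - (g w' + w') \<in> V" using vec.subspace_diff[OF V] g[OF w] g[OF w'] by blast
    moreover have "(g w + w) - (g w' + w') = w + w'" using eq by (simp add: vec_minus_eq add_ac)
    ultimately have "w + w' \<in> V" by simp
    moreover have "w + w' \<in> W" using vec.subspace_add[OF W] w w' by blast
    ultimately have "w + w' = 0" using VW by auto
    then show "w = w'" by (metis add.assoc add_0_right vec_add_self add_0_left add.commute)
  qed
  let ?A = "V - {0}" and ?B = "W - {0}" and ?C = "g ` (W - {0})"
  have cA: "card ?A = 2^k - 1" using card_subspace_minus0[OF V] k_def by simp
  have cB: "card ?B = 2^(2*m-k) - 1" using card_subspace_minus0[OF W] dW by simp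
  have cC: "card ?C = 2^(2*m-k) - 1" using card_image[OF inj] cB by simp
  have sub: "?A \<union> ?B \<union> ?C \<subseteq> ?N" using VN WN g by auto
  have d1: "?A \<inter> ?B = {}" using VW by auto
  have d2: "(?A \<union> ?B) \<inter> ?C = {}" using g by auto
  have "card (?A \<union> ?B \<union> ?C) = card ?A + card ?B + card ?C"
    using card_Un_disjoint[OF _ _ d2] card_Un_disjoint[OF _ _ d1] by simp
  moreover have "card (?A \<union> ?B \<union> ?C) \<le> card ?N" by (rule card_mono[OF _ sub]) simp
  ultimately have "card ?N \<ge> card ?A + card ?B + card ?C" by linarith
  then have "card ?N \<ge> (2^k - 1) + 2 * (2^(2*m-k) - 1)" unfolding cA cB cC by linarith
  moreover have "3 * (2^m - 1) \<le> (2^k - 1) + 2 * ((2::nat)^(2*m-k) - 1)" by (rule pow_arith[OF km m1])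
  ultimately show ?thesis using m by simp
qed

theorem mainTheorem19:
  fixes F :: "bit ^ 'n \<Rightarrow> bit ^ 'n" and V W :: "(bit ^ 'n) set"
  assumes "even CARD('n)"
    and "quadratic_fun F"
    and "vec.subspace V" and "vec.subspace W"
    and "V \<subseteq> nonbent_set F \<union> {0}" and "W \<subseteq> nonbent_set F \<union> {0}"
    and "V \<inter> W = {0}" and "{v + w | v w. v \<in> V \<and> w \<in> W} = UNIV"
  shows "card (nonbent_set F) \<ge> 3 * (2 ^ (CARD('n) div 2) - 1) \<and>
         (\<forall>U. vec.subspace U \<and> vec.dim U = CARD('n) div 2 + 1
              \<longrightarrow> card (U \<inter> nonbent_set F) \<ge> 3)"
proof -
  have dVW: "vec.dim V + vec.dim W = CARD('n)"
    using vec.dim_sums_Int[OF assms(3,4)] assms(7,8) vec_dim_card[where 'a=bit and 'n='n] by simp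
  have P1: "card (nonbent_set F) \<ge> 3 * (2 ^ (CARD('n) div 2) - 1)"
  proof (cases "vec.dim V \<ge> CARD('n) div 2")
    case True
    show ?thesis by (rule part1[OF assms(1-7) dVW True])
  next
    case False
    then have c: "vec.dim W \<ge> CARD('n) div 2" using dVW by linarith
    have a: "W \<inter> V = {0}" using assms(7) by blast
    have b: "vec.dim W + vec.dim V = CARD('n)" using dVW by simp
    from a b c show ?thesis by (rule part1[OF assms(1,2,4,3,6,5)])
  qed
  moreover have "\<forall>U. vec.subspace U \<and> vec.dim U = CARD('n) div 2 + 1
              \<longrightarrow> card (U \<inter> nonbent_set F) \<ge> 3"
  proof (intro allI impI)
    fix U :: "(bit^'n) set"
    assume "vec.subspace U \<and> vec.dim U = CARD('n) div 2 + 1"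
    then show "card (U \<inter> nonbent_set F) \<ge> 3"
      using blocking[OF assms(1-7) dVW, of U] by (elim conjE) simp
  qed
  ultimately show ?thesis by (rule conjI)
qed

end
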